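(* Let $G=(V,E)$ be an unweighted connected graph with $n$ vertices, and let $s,t\in V$ be distinct. Then $$ \frac{2}{n^{2}}\leq B_{st}^{2}. $$
   Context: $L=D-A$ is the Laplacian of the unweighted graph $G$, $L^{+}$ its Moore–Penrose pseudoinverse, $L^{2+}=(L^+)^2$, and $1_v$ the indicator vector of vertex $v$. The biharmonic distance is $B_{st}=\sqrt{(1_s-1_t)^{T}L^{2+}(1_s-1_t)}$. *)

theory Defs
  imports "HOL-Analysis.Analysis"
begin

text \<open>Vertices of the graph are the elements of a finite type 'n (so n = CARD('n)).
  An unweighted simple graph is a symmetric irreflexive adjacency relation.\<close>

definition simple_graph :: "('n::finite \<Rightarrow> 'n \<Rightarrow> bool) \<Rightarrow> bool" where
  "simple_graph E \<longleftrightarrow> (\<forall>u v. E u v \<longrightarrow> E v u) \<and> (\<forall>v. \<not> E v v)"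

definition connected_graph :: "('n::finite \<Rightarrow> 'n \<Rightarrow> bool) \<Rightarrow> bool" where
  "connected_graph E \<longleftrightarrow> (\<forall>u v. E\<^sup>*\<^sup>* u v)"

definition degree :: "('n::finite \<Rightarrow> 'n \<Rightarrow> bool) \<Rightarrow> 'n \<Rightarrow> real" where
  "degree E v = real (card {w. E v w})"

definition laplacian :: "('n::finite \<Rightarrow> 'n \<Rightarrow> bool) \<Rightarrow> real^'n^'n" where
  "laplacian E = (\<chi> i j. (if i = j then degree E i else 0) - (if E i j then 1 else 0))"

definition pinv :: "real^'n^'n \<Rightarrow> real^'n^'n" where
  "pinv A = (THE X. A ** X ** A = A \<and> X ** A ** X = X \<and>
                    transpose (A ** X) = A ** X \<and> transpose (X ** A) = X ** A)"

definition indicator_vec :: "'n::finite \<Rightarrow> real^'n" where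
  "indicator_vec v = (\<chi> i. if i = v then 1 else 0)"

definition biharmonic_dist :: "('n::finite \<Rightarrow> 'n \<Rightarrow> bool) \<Rightarrow> 'n \<Rightarrow> 'n \<Rightarrow> real" where
  "biharmonic_dist E s t =
     (let x = indicator_vec s - indicator_vec t;
          Lp = pinv (laplacian E)
      in sqrt (x \<bullet> ((Lp ** Lp) *v x)))"

end

theory Submission
  imports Defs
begin


lemma degree_sum: "degree E i = (\<Sum>j\<in>UNIV. if E i j then 1 else 0)"
  unfolding degree_def by (simp add: sum.If_cases)

lemma lap_mulv: "(laplacian E *v v) $ i = (\<Sum>j\<in>UNIV. if E i j then v$i - v$j else 0)"
proof -
  have "(laplacian E *v v) $ i = (\<Sum>j\<in>UNIV. ((if i = j then degree E i else 0) - (if E i j then 1 else 0)) * v$j)"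
    by (simp add: laplacian_def matrix_vector_mult_def)
  also have "\<dots> = (\<Sum>j\<in>UNIV. (if i = j then degree E i else 0) * v$j) - (\<Sum>j\<in>UNIV. (if E i j then 1 else 0) * v$j)"
    by (simp add: left_diff_distrib sum_subtractf)
  also have "(\<Sum>j\<in>UNIV. (if i = j then degree E i else 0) * v$j) = (\<Sum>j\<in>UNIV. if i = j then degree E i * v$j else 0)"
    by (rule sum.cong) auto
  also have "\<dots> = degree E i * v$i" by simp
  also have "degree E i * v$i = (\<Sum>j\<in>UNIV. (if E i j then 1 else 0) * v$i)"
    by (simp add: degree_sum sum_distrib_right)
  finally show ?thesis by (auto simp: sum_subtractf[symmetric] intro!: sum.cong)
qed

lemma lap_bilin:
  assumes "simple_graph E"
  shows "u \<bullet> (laplacian E *v v) = (1/2) * (\<Sum>p\<in>UNIV. if E (fst p) (snd p) then (u$fst p - u$snd p)*(v$fst p - v$snd p) else 0)"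
proof -
  have sym: "E i j = E j i" for i j using assms unfolding simple_graph_def by blast
  define S where "S = (\<Sum>i\<in>UNIV. \<Sum>j\<in>UNIV. if E i j then u$i * (v$i - v$j) else 0)"
  have 1: "u \<bullet> (laplacian E *v v) = S"
    unfolding S_def inner_vec_def lap_mulv by (simp add: sum_distrib_left if_distrib cong: if_cong)
  have "S = (\<Sum>j\<in>UNIV. \<Sum>i\<in>UNIV. if E i j then u$i * (v$i - v$j) else 0)"
    unfolding S_def by (rule sum.swap)
  also have "\<dots> = (\<Sum>i\<in>UNIV. \<Sum>j\<in>UNIV. if E i j then - (u$j * (v$i - v$j)) else 0)"
    apply (intro sum.cong refl) apply (subst sym) by (simp add: algebra_simps)
  finally have 2: "S = \<dots>" .
  have "2 * S = (\<Sum>i\<in>UNIV. \<Sum>j\<in>UNIV. if E i j then (u$i - u$j) * (v$i - v$j) else 0)"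
    apply (subst mult_2, subst S_def, subst 2)
    by (simp add: sum.distrib[symmetric]) (intro sum.cong refl; auto simp: algebra_simps)
  also have "\<dots> = (\<Sum>p\<in>UNIV. if E (fst p) (snd p) then (u$fst p - u$snd p)*(v$fst p - v$snd p) else 0)"
    by (simp add: sum.cartesian_product UNIV_Times_UNIV[symmetric] case_prod_beta del: UNIV_Times_UNIV)
  finally show ?thesis using 1 by simp
qed



lemma mm_diff_l: "(A::real^'n^'m) ** (B - C) = A ** B - A ** C"
  by (simp add: vec_eq_iff matrix_matrix_mult_def sum_subtractf right_diff_distrib)
lemma mm_diff_r: "((B::real^'n^'m) - C) ** (A::real^'k^'n) = B ** A - C ** A"
  by (simp add: vec_eq_iff matrix_matrix_mult_def sum_subtractf left_diff_distrib)
lemma mm_add_r: "((B::real^'n^'m) + C) ** (A::real^'k^'n) = B ** A + C ** A"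
  by (simp add: vec_eq_iff matrix_matrix_mult_def sum.distrib distrib_right)

definition penrose :: "real^'n^'n \<Rightarrow> real^'n^'n \<Rightarrow> bool" where
  "penrose A X \<longleftrightarrow> A ** X ** A = A \<and> X ** A ** X = X \<and>
                    transpose (A ** X) = A ** X \<and> transpose (X ** A) = X ** A"

lemma penrose_unique:
  assumes X: "penrose A X" and Y: "penrose A Y"
  shows "X = Y"
proof -
  have X1: "A ** X ** A = A" and X2: "X ** A ** X = X" and X3: "transpose (A ** X) = A ** X"
    and X4: "transpose (X ** A) = X ** A" using X unfolding penrose_def by auto
  have Y1: "A ** Y ** A = A" and Y2: "Y ** A ** Y = Y" and Y3: "transpose (A ** Y) = A ** Y"
    and Y4: "transpose (Y ** A) = Y ** A" using Y unfolding penrose_def by auto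
  have tA: "transpose A = transpose A ** transpose Y ** transpose A"
    using arg_cong[OF Y1, of transpose] by (simp add: matrix_transpose_mul matrix_mul_assoc)
  have "X = X ** (A ** X)" using X2 by (simp add: matrix_mul_assoc)
  also have "\<dots> = X ** transpose X ** transpose A" using X3
    by (metis matrix_mul_assoc matrix_transpose_mul)
  also have "\<dots> = X ** transpose X ** (transpose A ** transpose Y ** transpose A)"
    using tA by simp
  also have "\<dots> = X ** transpose (A ** X) ** transpose (A ** Y)"
    by (simp add: matrix_transpose_mul matrix_mul_assoc)
  also have "\<dots> = X ** A ** Y" using X3 Y3 X2 by (simp add: matrix_mul_assoc)
  finally have 1: "X = X ** A ** Y" .
  have "Y = (Y ** A) ** Y" using Y2 by (simp add: matrix_mul_assoc)
  also have "\<dots> = transpose A ** transpose Y ** Y" using Y4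
    by (metis matrix_transpose_mul)
  also have "\<dots> = (transpose A ** transpose X ** transpose A) ** transpose Y ** Y"
    using arg_cong[OF X1, of transpose] by (simp add: matrix_transpose_mul matrix_mul_assoc)
  also have "\<dots> = transpose (X ** A) ** transpose (Y ** A) ** Y"
    by (simp add: matrix_transpose_mul matrix_mul_assoc)
  also have "\<dots> = X ** A ** Y" using X4 Y4 Y2 by (metis matrix_mul_assoc)
  finally show ?thesis using 1 by simp
qed

lemma pinv_eq: "penrose A X \<Longrightarrow> pinv A = X"
  unfolding pinv_def
  apply (rule the_equality)
  using penrose_unique unfolding penrose_def by blast+

lemma penrose_sym:
  assumes "penrose A X" "transpose A = A"
  shows "transpose X = X"
proof -
  have "penrose A (transpose X)"
    using assms unfolding penrose_def
    by (metis matrix_transpose_mul matrix_mul_assoc transpose_transpose)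
  then show ?thesis using penrose_unique assms(1) by blast
qed



lemma lap_sym: "simple_graph E \<Longrightarrow> transpose (laplacian E) = laplacian E"
  unfolding simple_graph_def laplacian_def transpose_def by (auto simp: vec_eq_iff)

lemma lap_psd: assumes "simple_graph E" shows "0 \<le> v \<bullet> (laplacian E *v v)"
  unfolding lap_bilin[OF assms] by (auto intro!: sum_nonneg)

lemma lap_cs:
  assumes "simple_graph E"
  shows "(u \<bullet> (laplacian E *v v))^2 \<le> (u \<bullet> (laplacian E *v u)) * (v \<bullet> (laplacian E *v v))"
proof -
  define a where "a = (\<lambda>p. if E (fst p) (snd p) then u$fst p - u$snd p else (0::real))"
  define b where "b = (\<lambda>p. if E (fst p) (snd p) then v$fst p - v$snd p else (0::real))"
  have 1: "u \<bullet> (laplacian E *v v) = (1/2) * (\<Sum>p\<in>UNIV. a p * b p)"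
    unfolding lap_bilin[OF assms] a_def b_def by (auto intro!: sum.cong)
  have 2: "u \<bullet> (laplacian E *v u) = (1/2) * (\<Sum>p\<in>UNIV. (a p)^2)"
    unfolding lap_bilin[OF assms] a_def by (auto intro!: sum.cong simp: power2_eq_square)
  have 3: "v \<bullet> (laplacian E *v v) = (1/2) * (\<Sum>p\<in>UNIV. (b p)^2)"
    unfolding lap_bilin[OF assms] b_def by (auto intro!: sum.cong simp: power2_eq_square)
  show ?thesis unfolding 1 2 3 using Cauchy_Schwarz_ineq_sum[of a b UNIV]
    by (simp add: power_divide)
qed

lemma lap_zero_const:
  assumes "simple_graph E" "connected_graph E" "v \<bullet> (laplacian E *v v) = 0"
  shows "v$i = v$j"
proof -
  have "(\<Sum>p\<in>UNIV. if E (fst p) (snd p) then (v$fst p - v$snd p)*(v$fst p - v$snd p) else 0) = 0"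
    using assms(3) unfolding lap_bilin[OF assms(1)] by simp
  then have "\<forall>p\<in>UNIV. (if E (fst p) (snd p) then (v$fst p - v$snd p)*(v$fst p - v$snd p) else 0) = 0"
    by (subst sum_nonneg_eq_0_iff[symmetric]) auto
  then have e: "E a b \<Longrightarrow> v$a = v$b" for a b by (drule_tac x="(a,b)" in bspec) auto
  have "E\<^sup>*\<^sup>* i j" using assms(2) unfolding connected_graph_def by blast
  then show ?thesis by induct (auto dest: e)
qed

lemma lap_one: fixes E :: "'n::finite \<Rightarrow> 'n \<Rightarrow> bool" shows "laplacian E *v (vec 1 :: real^'n) = 0"
  by (simp add: vec_eq_iff lap_mulv cong: if_cong)

lemma sum_ind: "(\<Sum>j\<in>UNIV. f j * (indicator_vec s)$j) = (f s::real)"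
  unfolding indicator_vec_def by (simp add: mult.commute[of "f _"] if_distrib cong: if_cong)

lemma sum_le_card_minus:
  fixes E :: "'n::finite \<Rightarrow> 'n \<Rightarrow> bool"
  assumes "simple_graph E"
  shows "degree E s \<le> real CARD('n::finite) - 1"
proof -
  have "{w. E s w} \<subseteq> UNIV - {s}" using assms unfolding simple_graph_def by auto
  then have "card {w. E s w} \<le> card (UNIV - {s::'n})" by (intro card_mono) auto
  also have "\<dots> = CARD('n) - 1" by (simp add: card_Diff_singleton)
  finally have "card {w. E s w} + 1 \<le> CARD('n)"
    using zero_less_card_finite[where 'a='n] by linarith
  then have "real (card {w. E s w}) + 1 \<le> real CARD('n)" by (metis of_nat_1 of_nat_add of_nat_le_iff)
  then show ?thesis unfolding degree_def by simp
qed

lemma xLx: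
  fixes E :: "'n::finite \<Rightarrow> 'n \<Rightarrow> bool"
  assumes "simple_graph E" "s \<noteq> t"
  shows "(indicator_vec s - indicator_vec t) \<bullet> (laplacian E *v (indicator_vec s - indicator_vec t))
     \<le> 2 * real CARD('n)"
proof -
  let ?x = "indicator_vec s - indicator_vec t"
  have Lx: "(laplacian E *v ?x) $ i = laplacian E $ i $ s - laplacian E $ i $ t" for i
    by (simp add: matrix_vector_mult_def right_diff_distrib sum_subtractf sum_ind)
  have "?x \<bullet> (laplacian E *v ?x) = (laplacian E *v ?x) $ s - (laplacian E *v ?x) $ t"
  proof -
    have g: "?x \<bullet> w = (\<Sum>i\<in>UNIV. w$i * indicator_vec s $ i) - (\<Sum>i\<in>UNIV. w$i * indicator_vec t $ i)" for w :: "real^'n"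
      by (simp add: inner_vec_def sum_subtractf[symmetric] algebra_simps)
    have "?x \<bullet> (laplacian E *v ?x) = (\<Sum>i\<in>UNIV. (laplacian E *v ?x)$i * indicator_vec s $ i) - (\<Sum>i\<in>UNIV. (laplacian E *v ?x)$i * indicator_vec t $ i)"
      by (rule g)
    then show ?thesis by (simp only: sum_ind)
  qed
  also have "\<dots> = degree E s + degree E t + 2 * (if E s t then 1 else 0)"
  proof -
    have "E t s = E s t" "\<not> E s s" "\<not> E t t" using assms(1) unfolding simple_graph_def by blast+
    then show ?thesis using assms(2) unfolding Lx by (simp add: laplacian_def)
  qed
  also have "\<dots> \<le> 2 * real CARD('n)"
    using sum_le_card_minus[OF assms(1), of s] sum_le_card_minus[OF assms(1), of t] by auto
  finally show ?thesis .
qed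



theorem theoremA1:
  fixes E :: "'n::finite \<Rightarrow> 'n \<Rightarrow> bool" and s t :: 'n
  assumes "simple_graph E" and "connected_graph E" and "s \<noteq> t"
  shows "2 / (real CARD('n))^2 \<le> (biharmonic_dist E s t)^2"
proof -
  note sg = assms(1)
  define n where "n = real CARD('n)"
  have npos: "n > 0" unfolding n_def by simp
  define L where "L = laplacian E"
  define Jn :: "real^'n^'n" where "Jn = (\<chi> i j. 1 / n)"
  have Lsym: "transpose L = L" unfolding L_def using lap_sym[OF sg] .
  have Jsym: "transpose Jn = Jn" unfolding Jn_def by (simp add: transpose_def vec_eq_iff)
  have rowsum: "(\<Sum>k\<in>UNIV. L$i$k) = 0" for i
  proof -
    have "(\<Sum>k\<in>UNIV. L$i$k) = (L *v vec 1)$i" by (simp add: matrix_vector_mult_def)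
    also have "\<dots> = 0" unfolding L_def using lap_one[of E] by simp
    finally show ?thesis .
  qed
  have LJ: "L ** Jn = 0"
    by (simp add: vec_eq_iff matrix_matrix_mult_def Jn_def sum_divide_distrib[symmetric] rowsum)
  have JL: "Jn ** L = 0"
  proof -
    have "Jn ** L = transpose (L ** Jn)" by (simp add: matrix_transpose_mul Lsym Jsym)
    then show ?thesis unfolding LJ by (simp add: transpose_def vec_eq_iff)
  qed
  have JJ: "Jn ** Jn = Jn"
    using npos by (simp add: vec_eq_iff matrix_matrix_mult_def Jn_def n_def power2_eq_square)
  have Jv: "(Jn *v v)$i = (\<Sum>j\<in>UNIV. v$j) / n" for v :: "real^'n" and i
    by (simp add: matrix_vector_mult_def Jn_def sum_divide_distrib)
  define M where "M = L + Jn"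
  have Minj: "v = 0" if Mv: "M *v v = 0" for v
  proof -
    define sv where "sv = (\<Sum>j\<in>UNIV. v$j)"
    have "vec 1 \<bullet> (L *v v) = 0"
      unfolding L_def lap_bilin[OF sg] by (simp cong: if_cong)
    moreover have "vec 1 \<bullet> (Jn *v v) = sv"
      using npos by (simp add: inner_vec_def Jv sv_def n_def)
    moreover have "vec 1 \<bullet> (M *v v) = vec 1 \<bullet> (L *v v) + vec 1 \<bullet> (Jn *v v)"
      unfolding M_def by (simp add: matrix_vector_mult_add_rdistrib inner_add_right)
    ultimately have "sv = 0" using Mv by simp
    then have "Jn *v v = 0" by (simp add: vec_eq_iff Jv sv_def)
    then have "L *v v = 0" using Mv unfolding M_def by (simp add: matrix_vector_mult_add_rdistrib)
    then have "v \<bullet> (laplacian E *v v) = 0" unfolding L_def by simp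
    then have c: "v$i = v$j" for i j using lap_zero_const[OF sg assms(2)] by blast
    show ?thesis
    proof (rule vec_eq_iff[THEN iffD2], rule allI)
      fix i
      have vk: "v = vec (v$i)" unfolding vec_eq_iff vec_component using c by blast
      have "sv = n * v$i" unfolding sv_def n_def by (subst vk) simp
      then show "v$i = 0$i" using \<open>sv = 0\<close> npos by simp
    qed
  qed
  obtain B where BM: "B ** M = mat 1"
    using matrix_left_invertible_ker[of M] Minj by blast
  then have MB: "M ** B = mat 1" using matrix_left_right_inverse by blast
  have MJ: "M ** Jn = Jn" unfolding M_def by (simp add: mm_add_r LJ JJ)
  have JM: "Jn ** M = Jn" unfolding M_def by (simp add: matrix_add_ldistrib JL JJ)
  have BJ: "B ** Jn = Jn"
  proof -
    have "B ** Jn = B ** (M ** Jn)" by (simp add: MJ)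
    also have "\<dots> = (B ** M) ** Jn" by (rule matrix_mul_assoc)
    finally show ?thesis by (simp add: BM)
  qed
  have JB: "Jn ** B = Jn"
  proof -
    have "Jn ** B = (Jn ** M) ** B" by (simp add: JM)
    also have "\<dots> = Jn ** (M ** B)" by (rule matrix_mul_assoc[symmetric])
    finally show ?thesis by (simp add: MB)
  qed
  have LM: "L = M - Jn" unfolding M_def by simp
  define X where "X = B - Jn"
  have LX: "L ** X = mat 1 - Jn"
    unfolding X_def mm_diff_l LJ by (simp add: LM mm_diff_r MB JB)
  have XL: "X ** L = mat 1 - Jn"
    unfolding X_def mm_diff_r JL by (simp add: LM mm_diff_l BM BJ)
  have Psym: "transpose (mat 1 - Jn) = mat 1 - Jn"
    by (simp add: transpose_def vec_eq_iff mat_def Jn_def)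
  have "penrose L X"
    unfolding penrose_def
  proof (intro conjI)
    show "L ** X ** L = L" unfolding LX mm_diff_r JL by simp
    have JX: "Jn ** X = 0" unfolding X_def mm_diff_l JB JJ by simp
    show "X ** L ** X = X" unfolding XL mm_diff_r JX by simp
    show "transpose (L ** X) = L ** X" unfolding LX Psym ..
    show "transpose (X ** L) = X ** L" unfolding XL Psym ..
  qed
  then have Lp: "pinv L = X" by (rule pinv_eq)
  have Xsym: "transpose X = X" using penrose_sym[OF \<open>penrose L X\<close> Lsym] .
  define x where "x = indicator_vec s - indicator_vec t"
  define y where "y = X *v x"
  have g: "x \<bullet> w = (\<Sum>i\<in>UNIV. w$i * indicator_vec s $ i) - (\<Sum>i\<in>UNIV. w$i * indicator_vec t $ i)" for w :: "real^'n"
    unfolding x_def by (simp add: inner_vec_def sum_subtractf[symmetric] algebra_simps)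
  have xx: "x \<bullet> x = 2"
    unfolding g[of x] sum_ind using assms(3) by (simp add: x_def indicator_vec_def)
  have sx: "(\<Sum>j\<in>UNIV. x$j) = 0"
  proof -
    have "(\<Sum>j\<in>UNIV. x$j) = (\<Sum>j\<in>UNIV. 1 * indicator_vec s $ j) - (\<Sum>j\<in>UNIV. 1 * indicator_vec t $ j)"
      unfolding x_def by (simp add: sum_subtractf)
    then show ?thesis by (simp only: sum_ind)
  qed
  have Jx: "Jn *v x = 0" by (simp add: vec_eq_iff Jv sx)
  have Ly: "L *v y = x"
    unfolding y_def matrix_vector_mul_assoc LX by (simp add: matrix_vector_mult_diff_rdistrib Jx)
  have Bq: "(biharmonic_dist E s t)^2 = y \<bullet> y"
  proof -
    have "x \<bullet> ((X ** X) *v x) = x \<bullet> (X *v y)"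
      unfolding y_def matrix_vector_mul_assoc ..
    also have "\<dots> = (transpose X *v x) \<bullet> y"
      by (simp add: dot_lmul_matrix[symmetric])
    also have "\<dots> = y \<bullet> y" unfolding Xsym y_def ..
    finally have e: "x \<bullet> ((X ** X) *v x) = y \<bullet> y" .
    show ?thesis unfolding biharmonic_dist_def Let_def Lp[unfolded L_def]
      using e unfolding x_def by simp
  qed
  define a where "a = x \<bullet> (L *v x)"
  define r where "r = y \<bullet> x"
  define q where "q = y \<bullet> y"
  have a_le: "a \<le> 2 * n" unfolding a_def L_def x_def n_def using xLx[OF sg assms(3)] .
  have a_ge: "0 \<le> a" unfolding a_def L_def using lap_psd[OF sg] .
  have "(x \<bullet> (L *v y))^2 \<le> a * (y \<bullet> (L *v y))"
    unfolding a_def L_def using lap_cs[OF sg] .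
  then have ar: "4 \<le> a * r" unfolding Ly xx r_def by simp
  have rq: "r^2 \<le> 2 * q" unfolding r_def q_def using Cauchy_Schwarz_ineq[of y x] xx by simp
  have rpos: "r > 0"
  proof (rule ccontr)
    assume "\<not> r > 0"
    then have "a * r \<le> 0" using a_ge by (simp add: mult_nonneg_nonpos)
    then show False using ar by simp
  qed
  have "a * r \<le> 2 * n * r" using mult_right_mono[OF a_le, of r] rpos by simp
  then have "4 \<le> 2 * n * r" using ar by linarith
  then have r2: "2 / n \<le> r" using npos by (simp add: field_simps)
  have "(2/n)^2 \<le> r^2" using power_mono[OF r2, of 2] npos by simp
  then have "4 / n^2 \<le> 2 * q" using rq by (simp add: power_divide)
  then have "2 / n^2 \<le> q" by simp
  then show ?thesis unfolding Bq q_def n_def .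
qed


end
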